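(* Let $\mathfrak s$ be a finite-dimensional real solvable Lie algebra such that $[\mathfrak s,\mathfrak s]$ has codimension $1$ in $\mathfrak s$. If $\mathfrak s$ admits an abelian complex structure, then $\mathfrak s$ is isomorphic to $\mathfrak{aff}(\mathbb R)$, the $2$-dimensional non-abelian Lie algebra (spanned by $x,y$ with $[x,y]=x$).
   Context: An abelian complex structure on a real Lie algebra $\mathfrak g$ is a linear map $J$ with $J^2=-\mathrm{Id}$ and $[Jx,Jy]=[x,y]$ for all $x,y\in\mathfrak g$. *)

theory Defs
  imports "HOL-Analysis.Analysis"
begin

definition lie_algebra :: "('a::euclidean_space \<Rightarrow> 'a \<Rightarrow> 'a) \<Rightarrow> bool" where
  "lie_algebra br \<longleftrightarrow> bilinear br \<and> (\<forall>x. br x x = 0) \<and>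
     (\<forall>x y z. br x (br y z) + br y (br z x) + br z (br x y) = 0)"

definition bracket_span :: "('a::euclidean_space \<Rightarrow> 'a \<Rightarrow> 'a) \<Rightarrow> 'a set \<Rightarrow> 'a set \<Rightarrow> 'a set" where
  "bracket_span br A B = span {br x y | x y. x \<in> A \<and> y \<in> B}"

fun derived_series :: "('a::euclidean_space \<Rightarrow> 'a \<Rightarrow> 'a) \<Rightarrow> nat \<Rightarrow> 'a set" where
  "derived_series br 0 = UNIV"
| "derived_series br (Suc k) = bracket_span br (derived_series br k) (derived_series br k)"

definition solvable_lie :: "('a::euclidean_space \<Rightarrow> 'a \<Rightarrow> 'a) \<Rightarrow> bool" where
  "solvable_lie br \<longleftrightarrow> (\<exists>k. derived_series br k = {0})"

definition abelian_complex_structure ::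
  "('a::euclidean_space \<Rightarrow> 'a \<Rightarrow> 'a) \<Rightarrow> ('a \<Rightarrow> 'a) \<Rightarrow> bool" where
  "abelian_complex_structure br J \<longleftrightarrow> linear J \<and> (\<forall>x. J (J x) = - x) \<and>
     (\<forall>x y. br (J x) (J y) = br x y)"

definition lie_iso :: "('a::euclidean_space \<Rightarrow> 'a \<Rightarrow> 'a) \<Rightarrow> ('b::euclidean_space \<Rightarrow> 'b \<Rightarrow> 'b)
    \<Rightarrow> ('a \<Rightarrow> 'b) \<Rightarrow> bool" where
  "lie_iso br1 br2 f \<longleftrightarrow> linear f \<and> bij f \<and> (\<forall>u v. f (br1 u v) = br2 (f u) (f v))"

text \<open>aff(R) on R^2 = real \<times> real with basis x = (1,0), y = (0,1), [x,y] = x: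
  [(a,b),(c,d)] = (ad - bc) x.\<close>
definition aff_br :: "real \<times> real \<Rightarrow> real \<times> real \<Rightarrow> real \<times> real" where
  "aff_br u v = (fst u * snd v - snd u * fst v, 0)"

end

theory Submission
  imports Defs
begin

lemma ito_lemma:
  fixes c :: "'b::real_vector \<Rightarrow> 'b \<Rightarrow> 'b" and A B :: "'b set"
  assumes bl: "bilinear c"
    and jac: "\<And>x y z. c x (c y z) = c (c x y) z + c y (c x z)"
    and AA: "\<And>u v. u \<in> A \<Longrightarrow> v \<in> A \<Longrightarrow> c u v = 0"
    and BB: "\<And>u v. u \<in> B \<Longrightarrow> v \<in> B \<Longrightarrow> c u v = 0"
    and dec: "\<And>u. \<exists>p\<in>A. \<exists>q\<in>B. u = p + q"
    and a: "a \<in> A" and a1: "a1 \<in> A" and b: "b \<in> B" and b1: "b1 \<in> B"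
  shows "c (c a1 b1) (c a b) = 0"
proof -
  obtain p q where p: "p \<in> A" and q: "q \<in> B" and pq: "c a1 b = p + q" using dec by blast
  obtain p' q' where p': "p' \<in> A" and q': "q' \<in> B" and pq': "c b1 a = p' + q'" using dec by blast
  have h1: "c a1 (c a b) = c a q"
    using jac[of a1 a b] AA[OF a1 a] AA[OF a p] pq
    by (simp add: bilinear_lzero[OF bl] bilinear_radd[OF bl])
  have h2: "c b1 (c a q) = c p' q"
    using jac[of b1 a q] BB[OF b1 q] BB[OF q' q] pq'
    by (simp add: bilinear_rzero[OF bl] bilinear_ladd[OF bl])
  have h3: "c b1 (c a b) = c p' b"
    using jac[of b1 a b] BB[OF b1 b] BB[OF q' b] pq'
    by (simp add: bilinear_rzero[OF bl] bilinear_ladd[OF bl])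
  have h4: "c a1 (c p' b) = c p' q"
    using jac[of a1 p' b] AA[OF a1 p'] AA[OF p' p] pq
    by (simp add: bilinear_lzero[OF bl] bilinear_radd[OF bl])
  show ?thesis using jac[of a1 b1 "c a b"] h1 h2 h3 h4 by simp
qed


definition cbr :: "('a::real_vector \<Rightarrow> 'a \<Rightarrow> 'a) \<Rightarrow> 'a \<times> 'a \<Rightarrow> 'a \<times> 'a \<Rightarrow> 'a \<times> 'a" where
  "cbr br u v = (br (fst u) (fst v) - br (snd u) (snd v), br (fst u) (snd v) + br (snd u) (fst v))"

lemma cbr_bilinear:
  assumes bl: "bilinear br"
  shows "bilinear (cbr br)"
  unfolding bilinear_def
proof (intro conjI allI)
  fix x :: "'a \<times> 'a"
  show "linear (cbr br x)"
    by (rule linearI) (auto simp: cbr_def bilinear_radd[OF bl] bilinear_rmul[OF bl] algebra_simps)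
next
  fix y :: "'a \<times> 'a"
  show "linear (\<lambda>x. cbr br x y)"
    by (rule linearI) (auto simp: cbr_def bilinear_ladd[OF bl] bilinear_lmul[OF bl] algebra_simps)
qed

lemma metabelian:
  fixes br :: "'a::real_vector \<Rightarrow> 'a \<Rightarrow> 'a" and J :: "'a \<Rightarrow> 'a"
  assumes bl: "bilinear br"
    and anti: "\<And>x y. br x y = - br y x"
    and jac: "\<And>x y z. br x (br y z) = br (br x y) z + br y (br x z)"
    and lJ: "linear J" and JJ: "\<And>x. J (J x) = - x"
    and R2: "\<And>x y. br (J x) (J y) = br x y"
  shows "br (br x y) (br z w) = 0"
proof -
  have R1: "br (J x) y = - br x (J y)" for x y
    using R2[of x "J y"] by (simp add: JJ bilinear_rneg[OF bl]) (metis minus_minus)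
  define c where "c = cbr br"
  have cbl: "bilinear c" unfolding c_def by (rule cbr_bilinear[OF bl])
  have cjac: "c x (c y z) = c (c x y) z + c y (c x z)" for x y z
  proof -
    obtain p1 q1 p2 q2 p3 q3 where xyz: "x = (p1,q1)" "y = (p2,q2)" "z = (p3,q3)" by (cases x, cases y, cases z) auto
    show ?thesis unfolding xyz c_def cbr_def
      by (simp add: bilinear_radd[OF bl] bilinear_ladd[OF bl] bilinear_rsub[OF bl] bilinear_lsub[OF bl]
          jac[of p1 p2 p3] jac[of p1 p2 q3] jac[of p1 q2 p3] jac[of p1 q2 q3]
          jac[of q1 p2 p3] jac[of q1 p2 q3] jac[of q1 q2 p3] jac[of q1 q2 q3] algebra_simps)
  qed
  define A where "A = range (\<lambda>x. (x, - J x))"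
  define B where "B = range (\<lambda>x. (x, J x))"
  have AA: "c u v = 0" if "u \<in> A" "v \<in> A" for u v
  proof -
    obtain x y where "u = (x, - J x)" "v = (y, - J y)" using \<open>u \<in> A\<close> \<open>v \<in> A\<close> unfolding A_def by blast
    then show ?thesis unfolding c_def cbr_def
      using R2[of x y] R1[of x y] by (simp add: bilinear_rneg[OF bl] bilinear_lneg[OF bl] zero_prod_def)
  qed
  have BB: "c u v = 0" if "u \<in> B" "v \<in> B" for u v
  proof -
    obtain x y where "u = (x, J x)" "v = (y, J y)" using \<open>u \<in> B\<close> \<open>v \<in> B\<close> unfolding B_def by blast
    then show ?thesis unfolding c_def cbr_def
      using R2[of x y] R1[of x y] by (simp add: zero_prod_def)
  qed
  have dec: "\<exists>p\<in>A. \<exists>q\<in>B. u = p + q" for u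
  proof -
    obtain s t where u: "u = (s,t)" by (cases u)
    let ?p = "((1/2) *\<^sub>R (s + J t), - J ((1/2) *\<^sub>R (s + J t)))"
    let ?q = "((1/2) *\<^sub>R (s - J t), J ((1/2) *\<^sub>R (s - J t)))"
    have "?p \<in> A" unfolding A_def by blast
    moreover have "?q \<in> B" unfolding B_def by blast
    moreover have "u = ?p + ?q"
    proof -
      have e1: "J ((1/2) *\<^sub>R (s + J t)) = (1/2) *\<^sub>R (J s - t)"
        using lJ by (simp add: linear_add linear_scale JJ scaleR_diff_right)
      have e2: "J ((1/2) *\<^sub>R (s - J t)) = (1/2) *\<^sub>R (J s + t)"
        using lJ by (simp add: linear_diff linear_scale JJ scaleR_add_right)
      have e3: "(1/2) *\<^sub>R (s + J t) + (1/2) *\<^sub>R (s - J t) = s"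
        by (simp add: algebra_simps flip: scaleR_2)
      have e4: "- ((1/2) *\<^sub>R (J s - t)) + (1/2) *\<^sub>R (J s + t) = t"
        by (simp add: algebra_simps flip: scaleR_2)
      show ?thesis unfolding u e1 e2 using e3 e4 by simp
    qed
    ultimately show ?thesis by blast
  qed
  have ito: "c (c a1 b1) (c a b) = 0" if "a \<in> A" "a1 \<in> A" "b \<in> B" "b1 \<in> B" for a a1 b b1
    by (rule ito_lemma[OF cbl cjac AA BB dec that])
  define ha where "ha v = ((1/2) *\<^sub>R v, - J ((1/2) *\<^sub>R v))" for v
  define hb where "hb v = ((1/2) *\<^sub>R v, J ((1/2) *\<^sub>R v))" for v
  have haA: "ha v \<in> A" for v unfolding ha_def A_def by blast
  have hbB: "hb v \<in> B" for v unfolding hb_def B_def by blast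
  have split: "(v, 0) = ha v + hb v" for v
    unfolding ha_def hb_def by (simp flip: scaleR_add_left)
  have canti: "c u v = - c v u" for u v
  proof -
    obtain p q r s where uv: "u = (p,q)" "v = (r,s)" by (cases u, cases v) auto
    show ?thesis unfolding uv c_def cbr_def
      using anti[of p r] anti[of q s] anti[of p s] anti[of q r] by (simp add: algebra_simps)
  qed
  have cr: "c (v,0) (v',0) = (br v v', 0)" for v v'
    unfolding c_def cbr_def by (simp add: bilinear_rzero[OF bl] bilinear_lzero[OF bl])
  have c2: "c (v,0) (v',0) = c (ha v) (hb v') - c (ha v') (hb v)" for v v'
  proof -
    have "c (v,0) (v',0) = c (ha v + hb v) (ha v' + hb v')" by (simp flip: split)
    also have "\<dots> = c (ha v) (hb v') + c (hb v) (ha v')"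
      by (simp add: bilinear_ladd[OF cbl] bilinear_radd[OF cbl] AA[OF haA haA] BB[OF hbB hbB])
    finally show ?thesis using canti[of "hb v" "ha v'"] by simp
  qed
  have "(br (br x y) (br z w), 0) = c (c (x,0) (y,0)) (c (z,0) (w,0))" by (simp add: cr)
  also have "\<dots> = 0"
    unfolding c2
    by (simp add: bilinear_lsub[OF cbl] bilinear_rsub[OF cbl] ito haA hbB)
  finally show ?thesis by (simp add: zero_prod_def)
qed


lemma inj_on_sub:
  fixes ad :: "'a::euclidean_space \<Rightarrow> 'a" and n :: "'a set"
  assumes lin: "linear ad" and sub: "subspace n" and onto: "n \<subseteq> ad ` n"
    and v: "v \<in> n" and z: "ad v = 0"
  shows "v = 0"
proof (rule ccontr)
  assume nz: "v \<noteq> 0"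
  have ind1: "independent {v}" using nz by simp
  obtain B where vB: "{v} \<subseteq> B" and Bn: "B \<subseteq> n" and indB: "independent B" and nB: "n \<subseteq> span B"
    using maximal_independent_subset_extend[of "{v}" n] ind1 v by blast
  have finB: "finite B" using indB by (rule finiteI_independent)
  have cardB: "card B = dim n" using basis_card_eq_dim[OF Bn nB indB] .
  have "ad ` n \<subseteq> span (ad ` (B - {v}))"
  proof
    fix y assume "y \<in> ad ` n"
    then obtain w where w: "w \<in> n" "y = ad w" by blast
    have y1: "y \<in> ad ` span B" using w nB by blast
    have y2: "ad ` span B = span (ad ` B)" using span_linear_image[OF lin] by simp
    have y3: "ad ` B \<subseteq> insert 0 (ad ` (B - {v}))" using z by blast
    have "span (ad ` B) \<subseteq> span (insert 0 (ad ` (B - {v})))" using y3 by (rule span_mono)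
    then show "y \<in> span (ad ` (B - {v}))" using y1 y2 by (simp add: span_insert_0) blast
  qed
  then have "dim (ad ` n) \<le> card (ad ` (B - {v}))"
    using dim_le_card finB by (metis finite_Diff finite_imageI)
  also have "\<dots> \<le> card (B - {v})" using card_image_le finB by blast
  also have "\<dots> < card B" proof -
    have "0 < card B" using finB vB card_gt_0_iff by blast
    then show ?thesis using finB vB by simp
  qed
  finally have "dim (ad ` n) < dim n" using cardB by simp
  moreover have "dim n \<le> dim (ad ` n)" using onto by (rule dim_subset)
  ultimately show False by simp
qed

theorem mainTheorem13:
  fixes br :: "'a::euclidean_space \<Rightarrow> 'a \<Rightarrow> 'a"
  assumes "lie_algebra br"
    and "solvable_lie br"
    and "dim (bracket_span br UNIV UNIV) + 1 = DIM('a)"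
    and "\<exists>J. abelian_complex_structure br J"
  shows "\<exists>f. lie_iso br aff_br f"
proof -
  obtain J where lJ: "linear J" and JJ: "\<And>x. J (J x) = - x" and R2: "\<And>x y. br (J x) (J y) = br x y"
    using assms(4) unfolding abelian_complex_structure_def by blast
  have bl: "bilinear br" and alt: "\<And>x. br x x = 0"
    and jac0: "\<And>x y z. br x (br y z) + br y (br z x) + br z (br x y) = 0"
    using assms(1) unfolding lie_algebra_def by blast+
  have anti: "br x y = - br y x" for x y
  proof -
    have "br (x + y) (x + y) = br x x + br y x + (br x y + br y y)"
      by (simp add: bilinear_ladd[OF bl] bilinear_radd[OF bl])
    then have "br x y + br y x = 0" by (simp add: alt add.commute)
    then show ?thesis by (simp add: eq_neg_iff_add_eq_0)
  qed
  have jac: "br x (br y z) = br (br x y) z + br y (br x z)" for x y z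
  proof -
    have h1: "br y (br z x) = - br y (br x z)" using anti[of z x] bilinear_rneg[OF bl, of y "br x z"] by simp
    have h2: "br z (br x y) = - br (br x y) z" using anti[of z "br x y"] by simp
    have "br x (br y z) + - br y (br x z) + - br (br x y) z = 0" using jac0[of x y z] h1 h2 by simp
    then show ?thesis by (simp add: algebra_simps eq_neg_iff_add_eq_0 add_eq_0_iff)
  qed
  have meta: "br (br x y) (br z w) = 0" for x y z w
    using metabelian[OF bl anti jac lJ JJ R2] .
  define S where "S = {br x y |x y. x \<in> (UNIV::'a set) \<and> y \<in> (UNIV::'a set)}"
  define n where "n = bracket_span br UNIV UNIV"
  have n_def': "n = span S" unfolding n_def S_def bracket_span_def by simp
  have subn: "subspace n" unfolding n_def' by simp
  have brn: "br x y \<in> n" for x y unfolding n_def' S_def by (rule span_base) blast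
  have nab: "br u v = 0" if "u \<in> n" "v \<in> n" for u v
  proof -
    have bl0: "bilinear (\<lambda>(x::'a) (y::'a). (0::'a))" unfolding bilinear_def by (simp add: linear_zero)
    have "br u v = (\<lambda>x y. 0) u v"
    proof (rule bilinear_eq[OF bl bl0, of n S n S])
      show "n \<subseteq> span S" unfolding n_def' by simp
      show "n \<subseteq> span S" unfolding n_def' by simp
      show "u \<in> n" "v \<in> n" using that by auto
      show "br x y = 0" if "x \<in> S" "y \<in> S" for x y
        using that meta unfolding S_def by blast
    qed
    then show ?thesis by simp
  qed
  have dimn: "dim n + 1 = DIM('a)" using assms(3) unfolding n_def .
  obtain x0 where x0: "x0 \<notin> n"
  proof -
    have "n \<noteq> UNIV"
    proof
      assume "n = UNIV"
      then have "dim n = DIM('a)" by simp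
      with dimn show False by simp
    qed
    then show ?thesis using that by blast
  qed
  have spn: "span n = n" using subn by (simp add: span_eq_iff)
  have full: "span (insert x0 n) = UNIV"
    using dimn x0 dim_insert[of x0 n] spn by (simp add: dim_eq_full[symmetric])
  have decomp: "\<exists>t w. w \<in> n \<and> v = t *\<^sub>R x0 + w" for v
  proof -
    have "v \<in> span (insert x0 n)" using full by simp
    then obtain k where "v - k *\<^sub>R x0 \<in> span n" using span_breakdown_eq by blast
    then have "v - k *\<^sub>R x0 \<in> n" using spn by simp
    then show ?thesis by (metis add.commute diff_add_cancel)
  qed
  define ad where "ad v = br x0 v" for v
  have lad: "linear ad" unfolding ad_def using bl by (simp add: bilinear_def)
  have onto: "n \<subseteq> ad ` n"
  proof -
    have "S \<subseteq> ad ` n"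
    proof
      fix z assume "z \<in> S"
      then obtain u v where z: "z = br u v" unfolding S_def by blast
      obtain s u0 where u0: "u0 \<in> n" "u = s *\<^sub>R x0 + u0" using decomp by blast
      obtain t v0 where v0: "v0 \<in> n" "v = t *\<^sub>R x0 + v0" using decomp by blast
      have "z = br x0 (s *\<^sub>R v0 - t *\<^sub>R u0)"
        unfolding z u0(2) v0(2)
        using nab[OF u0(1) v0(1)] anti[of u0 x0]
        by (simp add: bilinear_ladd[OF bl] bilinear_radd[OF bl] bilinear_lmul[OF bl] bilinear_rmul[OF bl]
            bilinear_rsub[OF bl] alt)
      moreover have "s *\<^sub>R v0 - t *\<^sub>R u0 \<in> n"
        using subn u0(1) v0(1) by (simp add: subspace_diff subspace_scale)
      ultimately show "z \<in> ad ` n" unfolding ad_def by blast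
    qed
    moreover have "subspace (ad ` n)" by (rule linear_subspace_image[OF lad subn])
    ultimately show ?thesis unfolding n_def' by (rule span_minimal)
  qed
  have inj: "v = 0" if "v \<in> n" "br x0 v = 0" for v
    using inj_on_sub[OF lad subn onto] that unfolding ad_def by blast
  obtain a w0 where w0: "w0 \<in> n" and Jx0: "J x0 = a *\<^sub>R x0 + w0" using decomp by blast
  have key: "u = 0" if u: "u \<in> n" "J u \<in> n" for u
  proof -
    have "br x0 u = br (J x0) (J u)" using R2 by simp
    also have "\<dots> = a *\<^sub>R br x0 (J u)"
      unfolding Jx0 using nab[OF w0 u(2)] by (simp add: bilinear_ladd[OF bl] bilinear_lmul[OF bl])
    finally have "br x0 (u - a *\<^sub>R J u) = 0"
      by (simp add: bilinear_rsub[OF bl] bilinear_rmul[OF bl])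
    moreover have "u - a *\<^sub>R J u \<in> n" using u subn by (simp add: subspace_diff subspace_scale)
    ultimately have "u - a *\<^sub>R J u = 0" using inj by blast
    then have e: "u = a *\<^sub>R J u" by simp
    then have "J u = a *\<^sub>R J (J u)" using lJ by (metis linear_scale)
    then have "J u = - (a *\<^sub>R u)" by (simp add: JJ)
    then have "u = - ((a * a) *\<^sub>R u)" using e by simp
    then have "u + (a * a) *\<^sub>R u = 0" by (metis add.left_inverse)
    then have "(1 + a * a) *\<^sub>R u = 0" by (simp add: scaleR_add_left)
    moreover have "1 + a * a \<noteq> 0" proof -
      have "0 \<le> a * a" by simp
      then show ?thesis by linarith
    qed
    ultimately show ?thesis by simp
  qed
  have injJ: "inj J"
  proof (rule injI)
    fix u v assume "J u = J v"
    then have "J (J u) = J (J v)" by simp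
    then show "u = v" by (simp add: JJ)
  qed
  define T where "T = J ` n"
  have subT: "subspace T" unfolding T_def by (rule linear_subspace_image[OF lJ subn])
  have dimT: "dim T = dim n" unfolding T_def
    using dim_image_eq[OF lJ] injJ by (metis inj_on_subset subset_UNIV)
  have intT: "n \<inter> T \<subseteq> {0}"
  proof
    fix v assume "v \<in> n \<inter> T"
    then obtain u where u: "u \<in> n" "v = J u" "v \<in> n" unfolding T_def by blast
    then have "u = 0" using key by blast
    then show "v \<in> {0}" using u lJ by (simp add: linear_0)
  qed
  have "dim {x + y |x y. x \<in> n \<and> y \<in> T} + dim (n \<inter> T) = dim n + dim T"
    by (rule dim_sums_Int[OF subn subT])
  moreover have "dim (n \<inter> T) = 0" using intT by simp
  moreover have "dim {x + y |x y. x \<in> n \<and> y \<in> T} \<le> DIM('a)" by (rule dim_subset_UNIV)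
  ultimately have le1: "dim n \<le> 1" using dimT dimn by linarith
  show ?thesis
  proof (cases "dim n = 0")
    case True
    then have "n \<subseteq> {0}" by simp
    then have "w0 = 0" using w0 by blast
    then have "J x0 = a *\<^sub>R x0" using Jx0 by simp
    then have "J (J x0) = a *\<^sub>R (a *\<^sub>R x0)" using lJ by (metis linear_scale)
    then have "- x0 = (a * a) *\<^sub>R x0" by (simp add: JJ)
    then have "x0 + (a * a) *\<^sub>R x0 = x0 + - x0" by simp
    then have "x0 + (a * a) *\<^sub>R x0 = 0" by simp
    then have "(1 + a * a) *\<^sub>R x0 = 0" by (simp add: scaleR_add_left)
    moreover have "1 + a * a \<noteq> 0"
    proof -
      have "0 \<le> a * a" by simp
      then show ?thesis by linarith
    qed
    ultimately have "x0 = 0" by simp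
    moreover have "0 \<in> n" using subn by (rule subspace_0)
    ultimately show ?thesis using x0 by simp
  next
    case False
    then have d1: "dim n = 1" using le1 by linarith
    obtain B where Bn: "B \<subseteq> n" and indB: "independent B" and nB: "n \<subseteq> span B" and cB: "card B = dim n"
      using basis_exists[of n] by blast
    obtain e where Be: "B = {e}" using cB d1 card_1_singleton_iff by (metis One_nat_def)
    have en: "e \<in> n" using Bn Be by simp
    have enz: "e \<noteq> 0" using indB Be by simp
    have nse: "n \<subseteq> span {e}" using nB Be by simp
    obtain l where l: "br x0 e = l *\<^sub>R e" using brn[of x0 e] nse by (auto simp: span_singleton)
    have lnz: "l \<noteq> 0"
    proof
      assume "l = 0"
      then have "br x0 e = 0" using l by simp
      then have "e = 0" using inj en by blast
      then show False using enz by simp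
    qed
    define y where "y = (- (1 / l)) *\<^sub>R x0"
    have bey: "br e y = e"
      unfolding y_def using l lnz anti[of e x0] by (simp add: bilinear_rmul[OF bl] bilinear_rneg[OF bl])
    have bye: "br y e = - e" using bey anti[of y e] by simp
    define g where "g p = fst p *\<^sub>R e + snd p *\<^sub>R y" for p :: "real \<times> real"
    have lg: "linear g"
      by (rule linearI) (auto simp: g_def algebra_simps)
    have brg: "br (g p) (g q) = g (aff_br p q)" for p q
      unfolding g_def aff_br_def
      by (simp add: bilinear_ladd[OF bl] bilinear_radd[OF bl] bilinear_lmul[OF bl] bilinear_rmul[OF bl]
          alt bey bye algebra_simps)
    have injg: "inj g"
    proof (rule injI)
      fix p q assume pq: "g p = g q"
      define c where "c = fst p - fst q"
      define d where "d = snd p - snd q"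
      have eq: "c *\<^sub>R e + d *\<^sub>R y = 0"
        using pq unfolding g_def c_def d_def by (simp add: algebra_simps)
      have d0: "d = 0"
      proof (rule ccontr)
        assume dnz: "d \<noteq> 0"
        have "x0 = ((c * l) / d) *\<^sub>R e"
        proof -
          have "c *\<^sub>R e = (d / l) *\<^sub>R x0" using eq unfolding y_def
            by (simp add: algebra_simps eq_neg_iff_add_eq_0[symmetric])
          then have "(l / d) *\<^sub>R (c *\<^sub>R e) = x0" using dnz lnz by simp
          then show ?thesis by (simp add: algebra_simps)
        qed
        then have "x0 \<in> n" using en subn by (simp add: subspace_scale)
        then show False using x0 by simp
      qed
      then have "c = 0" using eq enz by simp
      then show "p = q" using d0 unfolding c_def d_def by (simp add: prod_eq_iff)
    qed
    have surjg: "surj g"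
    proof -
      have "v \<in> range g" for v
      proof -
        obtain t w where w: "w \<in> n" "v = t *\<^sub>R x0 + w" using decomp by blast
        obtain s where s: "w = s *\<^sub>R e" using w(1) nse by (auto simp: span_singleton)
        have "g (s, - (l * t)) = v" unfolding g_def y_def using w s lnz by simp
        then show ?thesis by (metis rangeI)
      qed
      then show ?thesis by blast
    qed
    have bijg: "bij g" using injg surjg by (simp add: bij_def)
    define f where "f = inv g"
    have gf: "g (f v) = v" for v unfolding f_def using surjg by (simp add: surj_f_inv_f)
    have fg: "f (g p) = p" for p unfolding f_def using injg by simp
    have lf: "linear f"
    proof (rule linearI)
      fix u v show "f (u + v) = f u + f v"
        using fg[of "f u + f v"] gf[of u] gf[of v] linear_add[OF lg, of "f u" "f v"] by simp
    next
      fix r u show "f (r *\<^sub>R u) = r *\<^sub>R f u"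
        using fg[of "r *\<^sub>R f u"] gf[of u] linear_scale[OF lg, of r "f u"] by simp
    qed
    have bijf: "bij f" unfolding f_def by (rule bij_imp_bij_inv[OF bijg])
    have brf: "f (br u v) = aff_br (f u) (f v)" for u v
      using brg[of "f u" "f v"] gf[of u] gf[of v] fg[of "aff_br (f u) (f v)"] by simp
    show ?thesis unfolding lie_iso_def using lf bijf brf by blast
  qed
qed

end
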